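(* Let $n\ge 2$ be an integer, $k,c_b>0$, $\rho_0>0$, and let $\lambda_{1,0},\dots,\lambda_{n,0}$ be real numbers with $\lambda_{1,0}=\cdots=\lambda_{J,0}<\lambda_{J+1,0}\le\cdots\le\lambda_{n,0}$ for some integer $1\le J\le n$. Consider the system $$\lambda_i'=-\lambda_i^2+\frac{k}{n}(\rho-c_b)\ (i=1,\dots,n),\qquad \rho'=-\rho\lambda,\quad \lambda=\sum_{i=1}^n\lambda_i,\qquad \rho(0)=\rho_0,\ \lambda_i(0)=\lambda_{i,0},$$ suppose its maximal interval of existence is $[0,t_B)$ with $0<t_B<\infty$, and let $u_i(t)=e^{\int_0^t\lambda_i(s)\,ds}$. Then for every $J<j\le n$ the functions $u_1'u_j$ and $u_1u_j'$ are bounded on $[0,t_B)$, and $\lim_{t\to t_B^-}u_1(t)u_j(t)=0$.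
   Context: Solutions are real-valued and continuously differentiable on $[0,t_B)$. *)

theory Defs
  imports "HOL-Analysis.Analysis"
begin

definition is_solution ::
  "nat \<Rightarrow> real \<Rightarrow> real \<Rightarrow> real \<Rightarrow> (nat \<Rightarrow> real) \<Rightarrow> real
     \<Rightarrow> (nat \<Rightarrow> real \<Rightarrow> real) \<Rightarrow> (real \<Rightarrow> real) \<Rightarrow> bool" where
  "is_solution n k cb rho0 lam0 T lam rho \<longleftrightarrow>
     0 < T \<and>
     rho 0 = rho0 \<and> (\<forall>i\<in>{1..n}. lam i 0 = lam0 i) \<and>
     continuous_on {0..<T} rho \<and> (\<forall>i\<in>{1..n}. continuous_on {0..<T} (lam i)) \<and>
     (\<forall>t\<in>{0..<T}.
        (\<forall>i\<in>{1..n}. (lam i has_real_derivative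
            (- (lam i t)\<^sup>2 + k / real n * (rho t - cb))) (at t within {0..<T})) \<and>
        (rho has_real_derivative (- rho t * (\<Sum>i=1..n. lam i t))) (at t within {0..<T}))"

definition maximal_solution ::
  "nat \<Rightarrow> real \<Rightarrow> real \<Rightarrow> real \<Rightarrow> (nat \<Rightarrow> real) \<Rightarrow> real
     \<Rightarrow> (nat \<Rightarrow> real \<Rightarrow> real) \<Rightarrow> (real \<Rightarrow> real) \<Rightarrow> bool" where
  "maximal_solution n k cb rho0 lam0 tB lam rho \<longleftrightarrow>
     is_solution n k cb rho0 lam0 tB lam rho \<and>
     \<not> (\<exists>T>tB. \<exists>lam' rho'. is_solution n k cb rho0 lam0 T lam' rho')"

end

theory Submission
  imports Defs "HOL-Analysis.Analysis"
begin

lemma picard_local: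
  fixes F :: "'a::banach \<Rightarrow> 'a" and x0 :: 'a
  assumes r: "0 < r" and h: "0 < h" and L0: "0 \<le> L"
    and lip: "\<And>x y. x \<in> cball x0 r \<Longrightarrow> y \<in> cball x0 r \<Longrightarrow> norm (F x - F y) \<le> L * norm (x - y)"
    and bnd: "\<And>x. x \<in> cball x0 r \<Longrightarrow> norm (F x) \<le> M"
    and hM: "h * M \<le> r" and hL: "h * L \<le> 1/2"
  shows "\<exists>y. y t0 = x0 \<and> (\<forall>t\<in>{t0..t0+h}. y t \<in> cball x0 r \<and>
            (y has_vector_derivative F (y t)) (at t within {t0..t0+h}))"
proof -
  have M0: "0 \<le> M" using bnd[of x0] r by (auto intro: order_trans[OF norm_ge_zero])
  define cl where "cl t = max t0 (min (t0+h) t)" for t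
  have cl_in: "cl t \<in> {t0..t0+h}" for t using h by (auto simp: cl_def)
  have cl_id: "t \<in> {t0..t0+h} \<Longrightarrow> cl t = t" for t by (auto simp: cl_def)
  have cl_cl: "cl (cl t) = cl t" for t using cl_id cl_in by blast
  have cl_cont: "continuous_on UNIV cl" unfolding cl_def by (intro continuous_intros)
  have Fcont: "continuous_on (cball x0 r) F"
  proof -
    have "lipschitz_on L (cball x0 r) F" using lip L0 by (auto simp: lipschitz_on_def dist_norm)
    thus ?thesis by (rule lipschitz_on_continuous_on)
  qed
  define S where "S = {g :: real \<Rightarrow>\<^sub>C 'a. (\<forall>t. apply_bcontfun g t \<in> cball x0 r) \<and> (\<forall>t. apply_bcontfun g t = apply_bcontfun g (cl t))}"
  define P where "P g t = x0 + integral {t0..cl t} (\<lambda>s. F (apply_bcontfun g s))" for g :: "real \<Rightarrow>\<^sub>C 'a" and t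
  have FG_cont: "continuous_on {t0..t0+h} (\<lambda>s. F (apply_bcontfun g s))" if "g \<in> S" for g
    using that unfolding S_def
    by (intro continuous_on_compose2[OF Fcont]) auto
  have FG_bnd: "norm (F (apply_bcontfun g s)) \<le> M" if "g \<in> S" for g s using that bnd unfolding S_def by auto
  have int_bnd: "norm (integral {t0..cl t} (\<lambda>s. F (apply_bcontfun g s))) \<le> M * h" if "g \<in> S" for g t
  proof -
    have "norm (integral {t0..cl t} (\<lambda>s. F (apply_bcontfun g s))) \<le> M * (cl t - t0)"
      apply (rule integral_bound)
      using cl_in[of t] continuous_on_subset[OF FG_cont[OF that]] FG_bnd[OF that] by auto
    also have "\<dots> \<le> M * h" using cl_in[of t] M0 by (intro mult_left_mono) auto
    finally show ?thesis .
  qed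
  have P_bc: "P g \<in> bcontfun" if "g \<in> S" for g
  proof (rule bcontfun_normI)
    have "continuous_on {t0..t0+h} (\<lambda>c. integral {t0..c} (\<lambda>s. F (apply_bcontfun g s)))"
      by (rule indefinite_integral_continuous_1, rule integrable_continuous_real, rule FG_cont[OF that])
    then have "continuous_on UNIV (\<lambda>t. integral {t0..cl t} (\<lambda>s. F (apply_bcontfun g s)))"
      by (intro continuous_on_compose2[OF _ cl_cont]) (use cl_in in auto)
    then show "continuous_on UNIV (P g)" unfolding P_def by (intro continuous_intros)
    show "norm (P g t) \<le> norm x0 + M * h" for t
      unfolding P_def using int_bnd[OF that, of t] by (metis add_left_mono norm_triangle_ineq order_trans)
  qed
  define Phi where "Phi g = Bcontfun (P g)" for g
  have Phi_app: "apply_bcontfun (Phi g) = P g" if "g \<in> S" for g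
    unfolding Phi_def using P_bc[OF that] by (simp add: Bcontfun_inverse)
  have Phi_S: "Phi ` S \<subseteq> S"
  proof
    fix g' assume "g' \<in> Phi ` S"
    then obtain g where g: "g \<in> S" "g' = Phi g" by auto
    have "P g t \<in> cball x0 r" for t
      using int_bnd[OF g(1), of t] hM by (auto simp: P_def dist_norm mult.commute)
    moreover have "P g t = P g (cl t)" for t unfolding P_def cl_cl ..
    ultimately show "g' \<in> S" unfolding S_def using g Phi_app by auto
  qed
  have Phi_contr: "dist (Phi g1) (Phi g2) \<le> 1/2 * dist g1 g2" if "g1 \<in> S" "g2 \<in> S" for g1 g2
  proof (rule dist_bound)
    fix t
    have i1: "(\<lambda>s. F (apply_bcontfun g1 s)) integrable_on {t0..cl t}"
      using cl_in[of t] by (intro integrable_continuous_real continuous_on_subset[OF FG_cont[OF that(1)]]) auto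
    have i2: "(\<lambda>s. F (apply_bcontfun g2 s)) integrable_on {t0..cl t}"
      using cl_in[of t] by (intro integrable_continuous_real continuous_on_subset[OF FG_cont[OF that(2)]]) auto
    have "dist (Phi g1 t) (Phi g2 t) = norm (integral {t0..cl t} (\<lambda>s. F (apply_bcontfun g1 s) - F (apply_bcontfun g2 s)))"
      using Phi_app that by (simp add: P_def dist_norm integral_diff[OF i1 i2])
    also have "\<dots> \<le> (L * dist g1 g2) * (cl t - t0)"
    proof (rule integral_bound)
      show "t0 \<le> cl t" using cl_in[of t] by auto
      show "continuous_on {t0..cl t} (\<lambda>s. F (apply_bcontfun g1 s) - F (apply_bcontfun g2 s))"
        using cl_in[of t] by (intro continuous_intros continuous_on_subset[OF FG_cont[OF that(1)]] continuous_on_subset[OF FG_cont[OF that(2)]]) auto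
      fix s
      have "norm (F (apply_bcontfun g1 s) - F (apply_bcontfun g2 s)) \<le> L * norm (apply_bcontfun g1 s - apply_bcontfun g2 s)"
        using that by (intro lip) (auto simp: S_def)
      also have "\<dots> \<le> L * dist g1 g2" using dist_bounded[of g1 s g2] L0 by (intro mult_left_mono) (auto simp: dist_norm)
      finally show "norm (F (apply_bcontfun g1 s) - F (apply_bcontfun g2 s)) \<le> L * dist g1 g2" .
    qed
    also have "\<dots> \<le> (L * dist g1 g2) * h" using cl_in[of t] L0 by (intro mult_left_mono) auto
    also have "\<dots> \<le> 1/2 * dist g1 g2" using hL by (metis mult.assoc mult.commute mult_right_mono zero_le_dist)
    finally show "dist (Phi g1 t) (Phi g2 t) \<le> 1/2 * dist g1 g2" .
  qed
  have ev_cont: "continuous_on UNIV (\<lambda>g :: real \<Rightarrow>\<^sub>C 'a. apply_bcontfun g t)" for t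
  proof -
    have "lipschitz_on 1 UNIV (\<lambda>g :: real \<Rightarrow>\<^sub>C 'a. apply_bcontfun g t)"
      by (auto simp: lipschitz_on_def dist_bounded)
    thus ?thesis by (rule lipschitz_on_continuous_on)
  qed
  have S_eq: "S = (\<Inter>t. (\<lambda>g. apply_bcontfun g t) -` cball x0 r) \<inter> (\<Inter>t. {g. apply_bcontfun g t = apply_bcontfun g (cl t)})"
    unfolding S_def by auto
  have "closed S" unfolding S_eq
    by (intro closed_Int closed_INT ballI closed_vimage closed_cball ev_cont closed_Collect_eq)
  then have cS: "complete S" by (simp add: complete_eq_closed)
  have "const_bcontfun x0 \<in> S" unfolding S_def using r by (simp add: const_bcontfun.rep_eq)
  then have Sne: "S \<noteq> {}" by auto
  obtain g where g: "g \<in> S" "Phi g = g"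
    using Banach_fix[OF cS Sne _ _ Phi_S Phi_contr] by auto
  have gP: "apply_bcontfun g t = P g t" for t using Phi_app[OF g(1)] g(2) by simp
  show ?thesis
  proof (intro exI conjI ballI)
    show "apply_bcontfun g t0 = x0" using gP[of t0] h by (simp add: P_def cl_def)
    fix t assume t: "t \<in> {t0..t0+h}"
    show "apply_bcontfun g t \<in> cball x0 r" using g(1) by (auto simp: S_def)
    have D: "((\<lambda>c. x0 + integral {t0..c} (\<lambda>s. F (apply_bcontfun g s))) has_vector_derivative F (apply_bcontfun g t)) (at t within {t0..t0+h})"
      using has_vector_derivative_add[OF has_vector_derivative_const integral_has_vector_derivative[OF FG_cont[OF g(1)] t]] by simp
    show "(apply_bcontfun g has_vector_derivative F (apply_bcontfun g t)) (at t within {t0..t0+h})"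
      by (rule has_vector_derivative_transform[OF t _ D]) (subst gP, simp add: P_def cl_id)
  qed
qed

lemma comp_deriv:
  fixes Y :: "real \<Rightarrow> (nat \<Rightarrow>\<^sub>C real)"
  assumes "(Y has_vector_derivative D) F"
  shows "((\<lambda>t. apply_bcontfun (Y t) i) has_real_derivative apply_bcontfun D i) F"
proof -
  have bl: "bounded_linear (\<lambda>X :: nat \<Rightarrow>\<^sub>C real. apply_bcontfun X i)"
  proof (rule bounded_linear_intro[where K=1])
    show "apply_bcontfun (x + y) i = apply_bcontfun x i + apply_bcontfun y i" for x y :: "nat \<Rightarrow>\<^sub>C real"
      by (simp add: plus_bcontfun.rep_eq)
    show "apply_bcontfun (r *\<^sub>R x) i = r *\<^sub>R apply_bcontfun x i" for r and x :: "nat \<Rightarrow>\<^sub>C real"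
      by (simp add: scaleR_bcontfun.rep_eq)
    show "norm (apply_bcontfun x i) \<le> norm x * 1" for x :: "nat \<Rightarrow>\<^sub>C real"
      using norm_bounded[of x i] by simp
  qed
  have "((\<lambda>t. apply_bcontfun (Y t) i) has_derivative (\<lambda>x. apply_bcontfun (x *\<^sub>R D) i)) F"
    using bounded_linear.has_derivative[OF bl assms[unfolded has_vector_derivative_def]] .
  moreover have "(\<lambda>x. apply_bcontfun (x *\<^sub>R D) i) = (*) (apply_bcontfun D i)"
    by (rule ext) (simp add: scaleR_bcontfun.rep_eq mult.commute)
  ultimately show ?thesis
    by (simp add: has_field_derivative_def)
qed

lemma glue_deriv:
  fixes f g :: "real \<Rightarrow> real"
  assumes t0: "0 \<le> t0" "t0 < tB" "t0 < T"
   and f: "\<And>t. t \<in> {0..<tB} \<Longrightarrow> (f has_real_derivative f' t) (at t within {0..<tB})"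
   and g: "\<And>t. t \<in> {t0..<T} \<Longrightarrow> (g has_real_derivative g' t) (at t within {t0..<T})"
   and eq: "f t0 = g t0" "f' t0 = g' t0"
   and t: "t \<in> {0..<T}"
  shows "((\<lambda>t. if t \<le> t0 then f t else g t) has_real_derivative (if t \<le> t0 then f' t else g' t)) (at t within {0..<T})"
proof -
  let ?h = "\<lambda>t. if t \<le> t0 then f t else g t"
  have L: "(?h has_real_derivative f' t) (at t within {0..t0})" if "t \<le> t0"
  proof -
    have "(f has_real_derivative f' t) (at t within {0..t0})"
      using f[of t] t that t0 by (auto intro: has_field_derivative_subset)
    then show ?thesis
      unfolding has_real_derivative_iff_has_vector_derivative
      by (rule has_vector_derivative_transform[rotated 2]) (use t that in auto)
  qed
  have R: "(?h has_real_derivative g' t) (at t within {t0..<T})" if "t0 \<le> t"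
  proof -
    have "(g has_real_derivative g' t) (at t within {t0..<T})" using g[of t] t that by auto
    then show ?thesis
      unfolding has_real_derivative_iff_has_vector_derivative
      by (rule has_vector_derivative_transform[rotated 2]) (use t that eq in auto)
  qed
  consider "t < t0" | "t = t0" | "t0 < t" by linarith
  then show ?thesis
  proof cases
    case 1
    have "at t within {0..t0} = at t within {0..<T}"
      by (rule at_within_nhd[where S="{..<t0}"]) (use 1 t0 in auto)
    then show ?thesis using L 1 by auto
  next
    case 2
    have "{0..<T} = {0..t0} \<union> {t0..<T}" using t0 by auto
    then show ?thesis using L[of] R 2 eq
      unfolding has_field_derivative_iff by (auto simp: Lim_within_Un)
  next
    case 3
    have "at t within {t0..<T} = at t within {0..<T}"
      by (rule at_within_nhd[where S="{t0<..}"]) (use 3 t0 in auto)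
    then show ?thesis using R 3 by auto
  qed
qed

lemma prod_lip:
  fixes a b p q :: real
  assumes "\<bar>b\<bar> \<le> R" "\<bar>p\<bar> \<le> S" "\<bar>a - b\<bar> \<le> d" "\<bar>p - q\<bar> \<le> e"
  shows "\<bar>a * p - b * q\<bar> \<le> d * S + R * e"
proof -
  have "a * p - b * q = (a - b) * p + b * (p - q)" by (simp add: algebra_simps)
  also have "\<bar>\<dots>\<bar> \<le> \<bar>a - b\<bar> * \<bar>p\<bar> + \<bar>b\<bar> * \<bar>p - q\<bar>" by (metis abs_mult abs_triangle_ineq)
  also have "\<dots> \<le> d * S + R * e" using assms by (intro add_mono mult_mono) auto
  finally show ?thesis .
qed

lemma sq_lip:
  fixes a b :: real
  assumes "\<bar>a\<bar> \<le> R" "\<bar>b\<bar> \<le> R" "\<bar>a - b\<bar> \<le> d"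
  shows "\<bar>a\<^sup>2 - b\<^sup>2\<bar> \<le> 2*R*d"
proof -
  have "a\<^sup>2 - b\<^sup>2 = (a - b) * (a + b)" by (simp add: algebra_simps power2_eq_square)
  also have "\<bar>\<dots>\<bar> = \<bar>a - b\<bar> * \<bar>a + b\<bar>" by (simp add: abs_mult)
  also have "\<dots> \<le> d * (2*R)" using assms by (intro mult_mono) auto
  finally show ?thesis by (simp add: ac_simps)
qed

instantiation nat :: metric_space
begin
definition dist_nat :: "nat \<Rightarrow> nat \<Rightarrow> real" where "dist_nat m n = (if m = n then 0 else 1)"
definition uniformity_nat :: "(nat \<times> nat) filter" where
  "uniformity_nat = (INF e\<in>{0<..}. principal {(x, y). dist x y < e})"
instance
proof
  show "uniformity = (INF e\<in>{0<..}. principal {(x, y). dist (x::nat) y < e})" by (rule uniformity_nat_def)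
  show "open U \<longleftrightarrow> (\<forall>x\<in>U. eventually (\<lambda>(x', y). x' = x \<longrightarrow> y \<in> U) uniformity)" for U :: "nat set"
  proof -
    have "eventually (\<lambda>(x', y). x' = x \<longrightarrow> y \<in> U) uniformity" if "x \<in> U" for x
      unfolding uniformity_nat_def
      by (rule eventually_INF1[of 1]) (auto simp: eventually_principal dist_nat_def that split: if_splits)
    then show ?thesis using open_discrete[of U] by auto
  qed
  show "dist x y = 0 \<longleftrightarrow> x = y" for x y :: nat by (simp add: dist_nat_def)
  show "dist x y \<le> dist x z + dist y z" for x y z :: nat by (simp add: dist_nat_def)
qed
end

instance bcontfun :: (metric_space, banach) banach ..

lemma extension:
  assumes sol: "is_solution n k cb rho0 lam0 tB lam rho"
    and k: "0 \<le> k" and cb: "0 \<le> cb"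
    and Brho: "\<And>t. t \<in> {0..<tB} \<Longrightarrow> \<bar>rho t\<bar> \<le> B"
    and Blam: "\<And>t i. t \<in> {0..<tB} \<Longrightarrow> i \<in> {1..n} \<Longrightarrow> \<bar>lam i t\<bar> \<le> B"
  shows "\<exists>T>tB. \<exists>lam' rho'. is_solution n k cb rho0 lam0 T lam' rho'"
proof -
  have tB: "0 < tB" and rho_0: "rho 0 = rho0" and lam_0: "\<And>i. i \<in> {1..n} \<Longrightarrow> lam i 0 = lam0 i"
    and dlam: "\<And>t i. t \<in> {0..<tB} \<Longrightarrow> i \<in> {1..n} \<Longrightarrow> (lam i has_real_derivative
            (- (lam i t)\<^sup>2 + k / real n * (rho t - cb))) (at t within {0..<tB})"
    and drho: "\<And>t. t \<in> {0..<tB} \<Longrightarrow> (rho has_real_derivative (- rho t * (\<Sum>i=1..n. lam i t))) (at t within {0..<tB})"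
    using sol unfolding is_solution_def by auto
  have B0: "0 \<le> B" using Brho[of 0] tB by auto
  define mk :: "(nat \<Rightarrow> real) \<Rightarrow> nat \<Rightarrow>\<^sub>C real" where "mk f = Bcontfun (\<lambda>i. if i \<le> n then f i else 0)" for f
  have mk_app: "apply_bcontfun (mk f) i = (if i \<le> n then f i else 0)" for f i
  proof -
    have "(\<lambda>i. if i \<le> n then f i else 0) \<in> bcontfun"
    proof (rule bcontfun_normI[where b="\<Sum>i\<le>n. \<bar>f i\<bar>"])
      show "continuous_on UNIV (\<lambda>i. if i \<le> n then f i else 0)" by simp
      show "norm (if i \<le> n then f i else 0) \<le> (\<Sum>i\<le>n. \<bar>f i\<bar>)" for i
        using member_le_sum[of i "{..n}" "\<lambda>i. \<bar>f i\<bar>"] by (auto intro: sum_nonneg)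
    qed
    then show ?thesis by (simp add: mk_def Bcontfun_inverse)
  qed
  define F where "F X = mk (\<lambda>i. if i = 0 then - apply_bcontfun X 0 * (\<Sum>l=1..n. apply_bcontfun X l)
       else - (apply_bcontfun X i)\<^sup>2 + k / real n * (apply_bcontfun X 0 - cb))" for X
  define R where "R = B + 1"
  define L where "L = 2 * real n * R + 2 * R + k / real n"
  define M where "M = real n * R\<^sup>2 + R\<^sup>2 + k / real n * (R + cb)"
  have R1: "1 \<le> R" using B0 by (simp add: R_def)
  have kn: "0 \<le> k / real n" using k by simp
  have L0: "0 \<le> L" unfolding L_def using R1 kn by simp
  have M0: "0 \<le> M" unfolding M_def using R1 kn cb by (intro add_nonneg_nonneg mult_nonneg_nonneg) auto
  have comp: "\<bar>apply_bcontfun X i\<bar> \<le> norm X" for X :: "nat \<Rightarrow>\<^sub>C real" and i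
    using norm_bounded[of X i] by simp
  have Lip: "norm (F X - F Y) \<le> L * norm (X - Y)" if XY: "norm X \<le> R" "norm Y \<le> R" for X Y
  proof (rule norm_bound)
    fix i
    define d where "d = norm (X - Y)"
    have d0: "0 \<le> d" by (simp add: d_def)
    have dXY: "\<bar>apply_bcontfun X l - apply_bcontfun Y l\<bar> \<le> d" for l
      using comp[of "X - Y" l] by (simp add: minus_bcontfun.rep_eq d_def)
    have xR: "\<bar>apply_bcontfun X l\<bar> \<le> R" for l using comp[of X l] XY by linarith
    have yR: "\<bar>apply_bcontfun Y l\<bar> \<le> R" for l using comp[of Y l] XY by linarith
    have "\<bar>apply_bcontfun (F X) i - apply_bcontfun (F Y) i\<bar> \<le> L * d"
    proof (cases "i \<le> n")
      case False then show ?thesis using L0 d0 by (simp add: F_def mk_app)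
    next
      case True
      show ?thesis
      proof (cases "i = 0")
        case True
        have sX: "\<bar>\<Sum>l=1..n. apply_bcontfun X l\<bar> \<le> real n * R"
        proof -
          have "\<bar>\<Sum>l=1..n. apply_bcontfun X l\<bar> \<le> (\<Sum>l=1..n. \<bar>apply_bcontfun X l\<bar>)" by (rule sum_abs)
          also have "\<dots> \<le> (\<Sum>l=1..n. R)" by (intro sum_mono xR)
          finally show ?thesis by simp
        qed
        have sY: "\<bar>\<Sum>l=1..n. apply_bcontfun Y l\<bar> \<le> real n * R"
        proof -
          have "\<bar>\<Sum>l=1..n. apply_bcontfun Y l\<bar> \<le> (\<Sum>l=1..n. \<bar>apply_bcontfun Y l\<bar>)" by (rule sum_abs)
          also have "\<dots> \<le> (\<Sum>l=1..n. R)" by (intro sum_mono yR)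
          finally show ?thesis by simp
        qed
        have sXY: "\<bar>(\<Sum>l=1..n. apply_bcontfun X l) - (\<Sum>l=1..n. apply_bcontfun Y l)\<bar> \<le> real n * d"
        proof -
          have "\<bar>(\<Sum>l=1..n. apply_bcontfun X l) - (\<Sum>l=1..n. apply_bcontfun Y l)\<bar>
               = \<bar>\<Sum>l=1..n. apply_bcontfun X l - apply_bcontfun Y l\<bar>" by (simp add: sum_subtractf)
          also have "\<dots> \<le> (\<Sum>l=1..n. \<bar>apply_bcontfun X l - apply_bcontfun Y l\<bar>)" by (rule sum_abs)
          also have "\<dots> \<le> (\<Sum>l=1..n. d)" by (intro sum_mono dXY)
          finally show ?thesis by simp
        qed
        have "\<bar>apply_bcontfun (F X) i - apply_bcontfun (F Y) i\<bar> =
           \<bar>apply_bcontfun Y 0 * (\<Sum>l=1..n. apply_bcontfun Y l) - apply_bcontfun X 0 * (\<Sum>l=1..n. apply_bcontfun X l)\<bar>"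
          using \<open>i = 0\<close> by (simp add: F_def mk_app)
        also have "\<dots> \<le> d * (real n * R) + R * (real n * d)"
          by (rule prod_lip[OF xR _ _ _]) (use sY sXY dXY[of 0] in \<open>auto simp: abs_minus_commute\<close>)
        also have "\<dots> \<le> L * d" unfolding L_def using d0 R1 kn mult_nonneg_nonneg[OF d0 kn] mult_nonneg_nonneg[of R d]
          by (simp add: algebra_simps)
        finally show ?thesis .
      next
        case False
        have "\<bar>apply_bcontfun (F X) i - apply_bcontfun (F Y) i\<bar> =
           \<bar>((apply_bcontfun Y i)\<^sup>2 - (apply_bcontfun X i)\<^sup>2) + k / real n * (apply_bcontfun X 0 - apply_bcontfun Y 0)\<bar>"
          using False \<open>i \<le> n\<close> by (simp add: F_def mk_app algebra_simps)
        also have "\<dots> \<le> \<bar>(apply_bcontfun Y i)\<^sup>2 - (apply_bcontfun X i)\<^sup>2\<bar> + k / real n * \<bar>apply_bcontfun X 0 - apply_bcontfun Y 0\<bar>"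
          using kn by (metis abs_mult abs_of_nonneg abs_triangle_ineq)
        also have "\<dots> \<le> 2 * R * d + k / real n * d"
          by (intro add_mono sq_lip yR xR mult_left_mono kn) (use dXY in \<open>auto simp: abs_minus_commute\<close>)
        also have "\<dots> \<le> L * d" unfolding L_def using d0 R1 kn mult_nonneg_nonneg[OF d0 kn] mult_nonneg_nonneg[of R d]
          by (simp add: algebra_simps)
        finally show ?thesis .
      qed
    qed
    then show "norm (apply_bcontfun (F X - F Y) i) \<le> L * norm (X - Y)"
      by (simp add: minus_bcontfun.rep_eq d_def)
  qed
  have Bnd: "norm (F X) \<le> M" if XR: "norm X \<le> R" for X
  proof (rule norm_bound)
    fix i
    have xR: "\<bar>apply_bcontfun X l\<bar> \<le> R" for l using comp[of X l] XR by linarith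
    have sX: "\<bar>\<Sum>l=1..n. apply_bcontfun X l\<bar> \<le> real n * R"
    proof -
      have "\<bar>\<Sum>l=1..n. apply_bcontfun X l\<bar> \<le> (\<Sum>l=1..n. \<bar>apply_bcontfun X l\<bar>)" by (rule sum_abs)
      also have "\<dots> \<le> (\<Sum>l=1..n. R)" by (intro sum_mono xR)
      finally show ?thesis by simp
    qed
    have a: "\<bar>apply_bcontfun X 0 * (\<Sum>l=1..n. apply_bcontfun X l)\<bar> \<le> R * (real n * R)"
      unfolding abs_mult by (intro mult_mono xR sX) (use R1 in auto)
    have b: "\<bar>- (apply_bcontfun X i)\<^sup>2 + k / real n * (apply_bcontfun X 0 - cb)\<bar> \<le> R\<^sup>2 + k / real n * (R + cb)"
    proof -
      have "\<bar>- (apply_bcontfun X i)\<^sup>2 + k / real n * (apply_bcontfun X 0 - cb)\<bar>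
          \<le> \<bar>apply_bcontfun X i\<bar>\<^sup>2 + k / real n * \<bar>apply_bcontfun X 0 - cb\<bar>"
      proof -
        have "\<bar>- (apply_bcontfun X i)\<^sup>2 + k / real n * (apply_bcontfun X 0 - cb)\<bar>
          \<le> \<bar>- (apply_bcontfun X i)\<^sup>2\<bar> + \<bar>k / real n * (apply_bcontfun X 0 - cb)\<bar>" by (rule abs_triangle_ineq)
        also have "\<dots> = \<bar>apply_bcontfun X i\<bar>\<^sup>2 + k / real n * \<bar>apply_bcontfun X 0 - cb\<bar>"
          using k by (simp add: abs_mult)
        finally show ?thesis .
      qed
      also have "\<dots> \<le> R\<^sup>2 + k / real n * (R + cb)"
      proof (intro add_mono mult_left_mono kn power_mono xR)
        show "\<bar>apply_bcontfun X 0 - cb\<bar> \<le> R + cb" using xR[of 0] cb by linarith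
      qed auto
      finally show ?thesis .
    qed
    show "norm (apply_bcontfun (F X) i) \<le> M"
      using a b M0 R1 unfolding M_def by (auto simp: F_def mk_app algebra_simps power2_eq_square)
  qed
  define h where "h = min (1 / (M + 1)) (1 / (2 * (L + 1)))"
  have h0: "0 < h" unfolding h_def using M0 L0 by simp
  have hM: "h * M \<le> 1"
  proof -
    have "h * M \<le> (1 / (M + 1)) * M" unfolding h_def using M0 by (intro mult_right_mono) auto
    also have "\<dots> \<le> 1" using M0 by (simp add: field_simps)
    finally show ?thesis .
  qed
  have hL: "h * L \<le> 1/2"
  proof -
    have "h * L \<le> (1 / (2 * (L + 1))) * L" unfolding h_def using L0 by (intro mult_right_mono) auto
    also have "\<dots> \<le> 1/2" using L0 by (simp add: field_simps)
    finally show ?thesis .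
  qed
  define t0 where "t0 = max 0 (tB - h/2)"
  define T where "T = t0 + h"
  have t0: "0 \<le> t0" "t0 < tB" "t0 < T" "tB < T" using h0 tB by (auto simp: t0_def T_def)
  define X0 where "X0 = mk (\<lambda>i. if i = 0 then rho t0 else lam i t0)"
  have X0_app: "apply_bcontfun X0 i = (if i \<le> n then (if i = 0 then rho t0 else lam i t0) else 0)" for i
    by (simp add: X0_def mk_app)
  have nX0: "norm X0 \<le> B"
  proof (rule norm_bound)
    fix i show "norm (apply_bcontfun X0 i) \<le> B"
      using Brho[of t0] Blam[of t0 i] t0 B0 by (auto simp: X0_app)
  qed
  have ball_R: "norm X \<le> R" if "X \<in> cball X0 1" for X
  proof -
    have "norm X \<le> norm X0 + norm (X - X0)" by (metis add_diff_cancel_left' norm_triangle_ineq add.commute diff_add_cancel)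
    also have "\<dots> \<le> B + 1" using nX0 that by (intro add_mono) (auto simp: dist_norm norm_minus_commute)
    finally show ?thesis by (simp add: R_def)
  qed
  obtain Y where Y0: "Y t0 = X0"
    and dY: "\<And>t. t \<in> {t0..t0+h} \<Longrightarrow> (Y has_vector_derivative F (Y t)) (at t within {t0..t0+h})"
    using picard_local[of 1 h L X0 F M t0] h0 L0 hM hL Lip Bnd ball_R by auto
  have dYc: "((\<lambda>t. apply_bcontfun (Y t) i) has_real_derivative apply_bcontfun (F (Y t)) i) (at t within {t0..<T})"
    if "t \<in> {t0..<T}" for t i
  proof (rule comp_deriv)
    show "(Y has_vector_derivative F (Y t)) (at t within {t0..<T})"
      using dY[of t] that by (auto simp: T_def intro: has_vector_derivative_within_subset)
  qed
  define lam' where "lam' i t = (if t \<le> t0 then lam i t else apply_bcontfun (Y t) i)" for i t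
  define rho' where "rho' t = (if t \<le> t0 then rho t else apply_bcontfun (Y t) 0)" for t
  have sum_eq: "(\<Sum>l=1..n. lam l t0) = (\<Sum>l=1..n. apply_bcontfun (Y t0) l)"
    by (rule sum.cong) (auto simp: Y0 X0_app)
  have drho': "(rho' has_real_derivative (- rho' t * (\<Sum>i=1..n. lam' i t))) (at t within {0..<T})"
    if t: "t \<in> {0..<T}" for t
  proof -
    have "(rho' has_real_derivative (if t \<le> t0 then - rho t * (\<Sum>i=1..n. lam i t)
            else - apply_bcontfun (Y t) 0 * (\<Sum>l=1..n. apply_bcontfun (Y t) l))) (at t within {0..<T})"
      unfolding rho'_def
    proof (rule glue_deriv[OF t0(1,2,3)])
      show "(rho has_real_derivative - rho s * (\<Sum>i = 1..n. lam i s)) (at s within {0..<tB})"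
        if "s \<in> {0..<tB}" for s using drho that by auto
      show "((\<lambda>t. apply_bcontfun (Y t) 0) has_real_derivative
          - apply_bcontfun (Y s) 0 * (\<Sum>l = 1..n. apply_bcontfun (Y s) l)) (at s within {t0..<T})"
        if "s \<in> {t0..<T}" for s using dYc[OF that, of 0] by (simp add: F_def mk_app)
      show "rho t0 = apply_bcontfun (Y t0) 0" by (simp add: Y0 X0_app)
      show "- rho t0 * (\<Sum>i = 1..n. lam i t0) = - apply_bcontfun (Y t0) 0 * (\<Sum>l = 1..n. apply_bcontfun (Y t0) l)"
        using sum_eq by (simp add: Y0 X0_app)
    qed (rule t)
    moreover have "(if t \<le> t0 then - rho t * (\<Sum>i=1..n. lam i t)
            else - apply_bcontfun (Y t) 0 * (\<Sum>l=1..n. apply_bcontfun (Y t) l)) = - rho' t * (\<Sum>i=1..n. lam' i t)"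
      by (simp add: rho'_def lam'_def)
    ultimately show ?thesis by simp
  qed
  have dlam': "(lam' i has_real_derivative (- (lam' i t)\<^sup>2 + k / real n * (rho' t - cb))) (at t within {0..<T})"
    if t: "t \<in> {0..<T}" and i: "i \<in> {1..n}" for t i
  proof -
    have "(lam' i has_real_derivative (if t \<le> t0 then - (lam i t)\<^sup>2 + k / real n * (rho t - cb)
            else - (apply_bcontfun (Y t) i)\<^sup>2 + k / real n * (apply_bcontfun (Y t) 0 - cb))) (at t within {0..<T})"
      unfolding lam'_def
    proof (rule glue_deriv[OF t0(1,2,3)])
      show "(lam i has_real_derivative - (lam i s)\<^sup>2 + k / real n * (rho s - cb)) (at s within {0..<tB})"
        if "s \<in> {0..<tB}" for s using dlam that i by auto
      show "((\<lambda>t. apply_bcontfun (Y t) i) has_real_derivative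
          - (apply_bcontfun (Y s) i)\<^sup>2 + k / real n * (apply_bcontfun (Y s) 0 - cb)) (at s within {t0..<T})"
        if "s \<in> {t0..<T}" for s using dYc[OF that, of i] i by (simp add: F_def mk_app)
      show "lam i t0 = apply_bcontfun (Y t0) i" using i by (simp add: Y0 X0_app)
      show "- (lam i t0)\<^sup>2 + k / real n * (rho t0 - cb) = - (apply_bcontfun (Y t0) i)\<^sup>2 + k / real n * (apply_bcontfun (Y t0) 0 - cb)"
        using i by (simp add: Y0 X0_app)
    qed (rule t)
    moreover have "(if t \<le> t0 then - (lam i t)\<^sup>2 + k / real n * (rho t - cb)
            else - (apply_bcontfun (Y t) i)\<^sup>2 + k / real n * (apply_bcontfun (Y t) 0 - cb)) = - (lam' i t)\<^sup>2 + k / real n * (rho' t - cb)"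
      by (simp add: rho'_def lam'_def)
    ultimately show ?thesis by simp
  qed
  have "is_solution n k cb rho0 lam0 T lam' rho'"
    unfolding is_solution_def
  proof (intro conjI ballI)
    show "0 < T" using t0 by linarith
    show "rho' 0 = rho0" using t0 rho_0 by (simp add: rho'_def)
    show "lam' i 0 = lam0 i" if "i \<in> {1..n}" for i using t0 lam_0[OF that] by (simp add: lam'_def)
    show "continuous_on {0..<T} rho'" by (rule DERIV_continuous_on[OF drho'])
    show "continuous_on {0..<T} (lam' i)" if "i \<in> {1..n}" for i by (rule DERIV_continuous_on[OF dlam'[OF _ that]])
    show "(rho' has_real_derivative (- rho' t * (\<Sum>i=1..n. lam' i t))) (at t within {0..<T})" if "t \<in> {0..<T}" for t
      using drho'[OF that] .
    show "(lam' i has_real_derivative (- (lam' i t)\<^sup>2 + k / real n * (rho' t - cb))) (at t within {0..<T})"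
      if "t \<in> {0..<T}" "i \<in> {1..n}" for t i using dlam'[OF that] .
  qed
  then show ?thesis using t0 by blast
qed

lemma barrier:
  fixes f :: "real \<Rightarrow> real"
  assumes ab: "a \<le> b" and fa: "f a \<le> m" and cont: "continuous_on {a..b} f"
    and der: "\<And>x. a < x \<Longrightarrow> x < b \<Longrightarrow> m < f x \<Longrightarrow> \<exists>D. (f has_real_derivative D) (at x) \<and> D \<le> 0"
  shows "f b \<le> m"
proof (rule ccontr)
  assume fb: "\<not> f b \<le> m"
  define S where "S = {a..b} \<inter> f -` {..m}"
  have cS: "closed S" unfolding S_def by (rule continuous_closed_preimage[OF cont]) auto
  have aS: "a \<in> S" using ab fa by (auto simp: S_def)
  have bdd: "bdd_above S" unfolding S_def by (rule bdd_aboveI[of _ b]) auto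
  define s0 where "s0 = Sup S"
  have s0S: "s0 \<in> S" unfolding s0_def using closed_contains_Sup[OF _ bdd cS] aS by auto
  have s0b: "s0 < b" using s0S fb by (auto simp: S_def less_le)
  have gt: "m < f x" if "s0 < x" "x \<le> b" for x
  proof (rule ccontr)
    assume "\<not> m < f x"
    then have "x \<in> S" using that s0S by (auto simp: S_def)
    then have "x \<le> s0" unfolding s0_def by (rule cSup_upper[OF _ bdd])
    then show False using that by simp
  qed
  have "continuous_on {s0..b} f" using s0S by (intro continuous_on_subset[OF cont]) (auto simp: S_def)
  moreover have "f differentiable (at x)" if "s0 < x" "x < b" for x
  proof -
    from der[of x] that s0S gt[of x] obtain D where "(f has_real_derivative D) (at x)"
      by (auto simp: S_def)
    then show ?thesis unfolding real_differentiable_def by blast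
  qed
  ultimately obtain l z where z: "s0 < z" "z < b" "DERIV f z :> l" "f b - f s0 = (b - s0) * l"
    using MVT[OF s0b] by blast
  obtain D where D: "(f has_real_derivative D) (at z)" "D \<le> 0" using der[of z] z gt[of z] s0S by (auto simp: S_def)
  have "l = D" using DERIV_unique[OF z(3) D(1)] .
  moreover have "(b - s0) * D \<le> 0" using D(2) s0b by (intro mult_nonneg_nonpos) auto
  ultimately have "f b \<le> f s0" using z(4) by simp
  then show False using s0S fb by (auto simp: S_def)
qed

lemma int_deriv:
  fixes f :: "real \<Rightarrow> real"
  assumes "continuous_on {0..<T} f" "t \<in> {0..<T}"
  shows "((\<lambda>t. integral {0..t} f) has_real_derivative f t) (at t within {0..<T})"
proof -
  define b where "b = (t + T) / 2"
  have b: "t < b" "b < T" using assms(2) by (auto simp: b_def)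
  have "continuous_on {0..b} f" using b by (intro continuous_on_subset[OF assms(1)]) auto
  then have "((\<lambda>t. integral {0..t} f) has_real_derivative f t) (at t within {0..b})"
    using assms(2) b by (intro integral_has_real_derivative) auto
  moreover have "at t within {0..b} = at t within {0..<T}"
    by (rule at_within_nhd[where S="{..<b}"]) (use b assms(2) in auto)
  ultimately show ?thesis by simp
qed

lemma not_bot_Ico:
  fixes t T :: real
  assumes "t \<in> {0..<T}"
  shows "at t within {0..<T} \<noteq> bot"
proof -
  have "t islimpt {0..<T}"
    unfolding islimpt_approachable
  proof (intro allI impI)
    fix e :: real assume e: "0 < e"
    define x where "x = t + min e (T - t) / 2"
    show "\<exists>x'\<in>{0..<T}. x' \<noteq> t \<and> dist x' t < e"
      by (rule bexI[of _ x]) (use assms e in \<open>auto simp: x_def dist_real_def min_def field_simps\<close>)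
  qed
  then show ?thesis using trivial_limit_within by blast
qed

lemma deriv_unique_Ico:
  fixes f :: "real \<Rightarrow> real"
  assumes "t \<in> {0..<T}" "(f has_real_derivative d) (at t within {0..<T})"
    "(f has_real_derivative e) (at t within {0..<T})"
  shows "d = e"
  using vector_derivative_unique_within[OF not_bot_Ico[OF assms(1)]] assms(2,3)
  by (auto simp: has_real_derivative_iff_has_vector_derivative)

lemma interior_deriv:
  fixes f :: "real \<Rightarrow> real"
  assumes "0 < t" "t < T" "(f has_real_derivative d) (at t within {0..<T})"
  shows "(f has_real_derivative d) (at t)"
proof -
  have "at t within {0..<T} = at t" by (rule at_within_interior) (use assms in auto)
  then show ?thesis using assms(3) by simp
qed

theorem corollary3p3:
  fixes n J :: nat and k cb rho0 tB :: real
    and lam0 :: "nat \<Rightarrow> real" and lam :: "nat \<Rightarrow> real \<Rightarrow> real" and rho :: "real \<Rightarrow> real"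
    and u :: "nat \<Rightarrow> real \<Rightarrow> real"
  assumes n: "n \<ge> 2" and k: "k > 0" and cb: "cb > 0" and rho0: "rho0 > 0"
    and J: "1 \<le> J" "J \<le> n"
    and eq: "\<forall>i\<in>{1..J}. lam0 i = lam0 1"
    and gap: "J < n \<longrightarrow> lam0 J < lam0 (J + 1)"
    and ord: "\<forall>i. J + 1 \<le> i \<and> i < n \<longrightarrow> lam0 i \<le> lam0 (i + 1)"
    and sol: "maximal_solution n k cb rho0 lam0 tB lam rho"
    and tB: "0 < tB"
    and u_def: "\<forall>i t. u i t = exp (integral {0..t} (lam i))"
  shows "\<forall>j. J < j \<and> j \<le> n \<longrightarrow>
           (\<exists>M. \<forall>t\<in>{0..<tB}. \<forall>d. (u 1 has_real_derivative d) (at t within {0..<tB})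
                 \<longrightarrow> \<bar>d * u j t\<bar> \<le> M) \<and>
           (\<exists>M. \<forall>t\<in>{0..<tB}. \<forall>d. (u j has_real_derivative d) (at t within {0..<tB})
                 \<longrightarrow> \<bar>u 1 t * d\<bar> \<le> M) \<and>
           ((\<lambda>t. u 1 t * u j t) \<longlongrightarrow> 0) (at_left tB)"
proof -
  have is_sol: "is_solution n k cb rho0 lam0 tB lam rho"
    and nomax: "\<not> (\<exists>T>tB. \<exists>lam' rho'. is_solution n k cb rho0 lam0 T lam' rho')"
    using sol unfolding maximal_solution_def by auto
  have rho_0: "rho 0 = rho0" and lam_0: "\<And>i. i \<in> {1..n} \<Longrightarrow> lam i 0 = lam0 i"
    and clam: "\<And>i. i \<in> {1..n} \<Longrightarrow> continuous_on {0..<tB} (lam i)"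
    and dlam: "\<And>t i. t \<in> {0..<tB} \<Longrightarrow> i \<in> {1..n} \<Longrightarrow> (lam i has_real_derivative
            (- (lam i t)\<^sup>2 + k / real n * (rho t - cb))) (at t within {0..<tB})"
    and drho: "\<And>t. t \<in> {0..<tB} \<Longrightarrow> (rho has_real_derivative (- rho t * (\<Sum>i=1..n. lam i t))) (at t within {0..<tB})"
    using is_sol unfolding is_solution_def by auto
  have n0: "0 < real n" using n by simp
  have one_in: "1 \<in> {1..n}" using n by simp
  define K where "K = k * cb / real n"
  have K0: "0 < K" using k cb n0 by (simp add: K_def)
  have kn0: "0 \<le> k / real n" using k n0 by simp
  define Ig where "Ig i t = integral {0..t} (lam i)" for i t
  have u_eq: "u i = (\<lambda>t. exp (Ig i t))" for i using u_def by (intro ext) (simp add: Ig_def)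
  have u_pos: "0 < u i t" for i t by (simp add: u_eq)
  have Ig0: "Ig i 0 = 0" for i by (simp add: Ig_def)
  have dInt: "(Ig i has_real_derivative lam i t) (at t within {0..<tB})" if "i \<in> {1..n}" "t \<in> {0..<tB}" for i t
    unfolding Ig_def by (rule int_deriv[OF clam[OF that(1)] that(2)])
  have du: "(u i has_real_derivative lam i t * u i t) (at t within {0..<tB})" if "i \<in> {1..n}" "t \<in> {0..<tB}" for i t
    using DERIV_chain2[OF DERIV_exp dInt[OF that]] by (simp add: u_eq mult.commute)
  have cont_sub: "continuous_on {a..b} (lam i)" if "i \<in> {1..n}" "0 \<le> a" "b < tB" for i a b
    using that by (intro continuous_on_subset[OF clam[OF that(1)]]) auto
  have crho: "continuous_on {0..<tB} rho" by (rule DERIV_continuous_on[OF drho])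
  have rho_eq: "rho t * exp (\<Sum>i=1..n. Ig i t) = rho0" if t: "t \<in> {0..<tB}" for t
  proof -
    have "\<exists>c. \<forall>t\<in>{0..<tB}. rho t * exp (\<Sum>i=1..n. Ig i t) = c"
    proof (rule has_field_derivative_zero_constant)
      show "convex {0..<tB}" by simp
      fix t assume t: "t \<in> {0..<tB}"
      have "((\<lambda>t. \<Sum>i=1..n. Ig i t) has_real_derivative (\<Sum>i=1..n. lam i t)) (at t within {0..<tB})"
        by (rule DERIV_sum) (use dInt t in auto)
      from DERIV_mult[OF drho[OF t] DERIV_chain2[OF DERIV_exp this]]
      show "((\<lambda>t. rho t * exp (\<Sum>i=1..n. Ig i t)) has_real_derivative 0) (at t within {0..<tB})"
        by (rule DERIV_cong) (simp add: algebra_simps)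
    qed
    then obtain c where c: "\<And>t. t \<in> {0..<tB} \<Longrightarrow> rho t * exp (\<Sum>i=1..n. Ig i t) = c" by blast
    have "c = rho0" using c[of 0] tB by (simp add: Ig0 rho_0)
    then show ?thesis using c[OF t] by simp
  qed
  have rho_eq2: "rho t = rho0 * exp (- (\<Sum>i=1..n. Ig i t))" if "t \<in> {0..<tB}" for t
    using rho_eq[OF that] by (simp add: exp_minus field_simps)
  have rho_pos: "0 < rho t" if "t \<in> {0..<tB}" for t using rho_eq2[OF that] rho0 by simp
  have q_lb: "- K \<le> k / real n * (rho t - cb)" if "t \<in> {0..<tB}" for t
  proof -
    have "k / real n * (0 - cb) \<le> k / real n * (rho t - cb)"
      using rho_pos[OF that] kn0 by (intro mult_left_mono) auto
    then show ?thesis by (simp add: K_def)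
  qed
  have rel: "(lam i t - lam 1 t) * (u 1 t * u i t) = lam0 i - lam0 1" if i: "i \<in> {1..n}" and t: "t \<in> {0..<tB}" for i t
  proof -
    have "\<exists>c. \<forall>t\<in>{0..<tB}. (lam i t - lam 1 t) * (u 1 t * u i t) = c"
    proof (rule has_field_derivative_zero_constant)
      show "convex {0..<tB}" by simp
      fix t assume t: "t \<in> {0..<tB}"
      from DERIV_mult[OF DERIV_diff[OF dlam[OF t i] dlam[OF t one_in]] DERIV_mult[OF du[OF one_in t] du[OF i t]]]
      show "((\<lambda>t. (lam i t - lam 1 t) * (u 1 t * u i t)) has_real_derivative 0) (at t within {0..<tB})"
        by (rule DERIV_cong) (simp add: algebra_simps power2_eq_square)
    qed
    then obtain c where c: "\<And>t. t \<in> {0..<tB} \<Longrightarrow> (lam i t - lam 1 t) * (u 1 t * u i t) = c" by blast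
    have "c = lam0 i - lam0 1" using c[of 0] tB lam_0[OF i] lam_0[OF one_in] by (simp add: u_eq Ig0)
    then show ?thesis using c[OF t] by simp
  qed
  have ordJ: "lam0 (J+1) \<le> lam0 i" if "J + 1 \<le> i" "i \<le> n" for i
    using that
  proof (induction i rule: dec_induct)
    case base then show ?case by simp
  next
    case (step m)
    then have "lam0 (J+1) \<le> lam0 m" by simp
    also have "lam0 m \<le> lam0 (m + 1)" using ord step by auto
    finally show ?case by simp
  qed
  have D_pos: "lam0 1 < lam0 i" if "J < i" "i \<le> n" for i
  proof -
    have "lam0 1 = lam0 J" using eq[rule_format, of J] J by simp
    also have "\<dots> < lam0 (J+1)" using gap that by simp
    also have "\<dots> \<le> lam0 i" using ordJ[of i] that by simp
    finally show ?thesis .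
  qed
  have D_nonneg: "lam0 1 \<le> lam0 i" if "i \<in> {1..n}" for i
  proof (cases "i \<le> J")
    case True then show ?thesis using eq[rule_format, of i] that by simp
  next
    case False then show ?thesis using D_pos[of i] that by simp
  qed
  have lam_ord: "lam 1 t \<le> lam i t" if "i \<in> {1..n}" "t \<in> {0..<tB}" for i t
  proof -
    have "0 \<le> (lam i t - lam 1 t) * (u 1 t * u i t)" using rel[OF that] D_nonneg[OF that(1)] by simp
    moreover have "0 < u 1 t * u i t" using u_pos[of 1 t] u_pos[of i t] by simp
    ultimately show ?thesis by (auto simp: zero_le_mult_iff)
  qed
  have no_lb: "\<not> (\<exists>A. \<forall>t\<in>{0..<tB}. - A \<le> lam 1 t)"
  proof
    assume "\<exists>A. \<forall>t\<in>{0..<tB}. - A \<le> lam 1 t"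
    then obtain A0 where A0: "\<And>t. t \<in> {0..<tB} \<Longrightarrow> - A0 \<le> lam 1 t" by blast
    define A where "A = max A0 0"
    have A: "0 \<le> A" by (simp add: A_def)
    have lam_lb: "- A \<le> lam i t" if "i \<in> {1..n}" "t \<in> {0..<tB}" for i t
      using A0[OF that(2)] lam_ord[OF that] by (simp add: A_def)
    have Ig_lb: "- (A * tB) \<le> Ig i t" if i: "i \<in> {1..n}" and t: "t \<in> {0..<tB}" for i t
    proof -
      have "integral {0..t} (\<lambda>_. - A) \<le> integral {0..t} (lam i)"
      proof (rule integral_le)
        show "(\<lambda>_. - A) integrable_on {0..t}" by (intro integrable_continuous_real continuous_intros)
        show "lam i integrable_on {0..t}" using t by (intro integrable_continuous_real cont_sub[OF i]) auto
        show "- A \<le> lam i x" if "x \<in> {0..t}" for x using lam_lb[OF i] that t by auto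
      qed
      moreover have "integral {0..t} (\<lambda>_. - A) = - (A * t)" using t by simp
      moreover have "A * t \<le> A * tB" using t A by (intro mult_left_mono) auto
      moreover have "0 \<le> t" using t by simp
      ultimately show ?thesis by (simp add: Ig_def mult.commute)
    qed
    define Rr where "Rr = rho0 * exp (real n * (A * tB))"
    have rho_ub: "rho t \<le> Rr" if t: "t \<in> {0..<tB}" for t
    proof -
      have "(\<Sum>i=1..n. - (A * tB)) \<le> (\<Sum>i=1..n. Ig i t)" by (intro sum_mono Ig_lb t)
      then have "- (\<Sum>i=1..n. Ig i t) \<le> real n * (A * tB)" by simp
      then show ?thesis unfolding rho_eq2[OF t] Rr_def using rho0 by simp
    qed
    define C where "C = k / real n * Rr"
    have C0: "0 \<le> C" unfolding C_def Rr_def using kn0 rho0 by (intro mult_nonneg_nonneg) auto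
    have q_ub: "k / real n * (rho t - cb) \<le> C" if "t \<in> {0..<tB}" for t
      unfolding C_def using rho_ub[OF that] cb kn0 by (intro mult_left_mono) auto
    have lam_ub: "lam i t \<le> max (lam0 i) (sqrt C)" if i: "i \<in> {1..n}" and t: "t \<in> {0..<tB}" for i t
    proof (rule barrier[where f="lam i" and a=0 and b=t])
      show "0 \<le> t" using t by simp
      show "lam i 0 \<le> max (lam0 i) (sqrt C)" using lam_0[OF i] by simp
      show "continuous_on {0..t} (lam i)" using t by (intro cont_sub[OF i]) auto
      fix x assume x: "0 < x" "x < t" "max (lam0 i) (sqrt C) < lam i x"
      have xI: "x \<in> {0..<tB}" using x t by auto
      have "(lam i has_real_derivative (- (lam i x)\<^sup>2 + k / real n * (rho x - cb))) (at x)"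
        using x t by (intro interior_deriv[OF _ _ dlam[OF xI i]]) auto
      moreover have "- (lam i x)\<^sup>2 + k / real n * (rho x - cb) \<le> 0"
      proof -
        have "sqrt C < lam i x" using x by simp
        then have "(sqrt C)\<^sup>2 < (lam i x)\<^sup>2" using C0 by (intro power_strict_mono) auto
        then have "C < (lam i x)\<^sup>2" using C0 by simp
        then show ?thesis using q_ub[OF xI] by simp
      qed
      ultimately show "\<exists>D. (lam i has_real_derivative D) (at x) \<and> D \<le> 0" by blast
    qed
    define Bd where "Bd = A + Rr + sqrt C + (\<Sum>i=1..n. \<bar>lam0 i\<bar>)"
    have Rr0: "0 \<le> Rr" using rho0 by (simp add: Rr_def)
    have sum0: "0 \<le> (\<Sum>i=1..n. \<bar>lam0 i\<bar>)" by (intro sum_nonneg) auto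
    have "\<exists>T>tB. \<exists>lam' rho'. is_solution n k cb rho0 lam0 T lam' rho'"
    proof (rule extension[OF is_sol, where B=Bd])
      show "0 \<le> k" "0 \<le> cb" using k cb by auto
      have sC: "0 \<le> sqrt C" using C0 by simp
      show "\<bar>rho t\<bar> \<le> Bd" if "t \<in> {0..<tB}" for t
        using rho_pos[OF that] rho_ub[OF that] A sC sum0 unfolding Bd_def by linarith
      show "\<bar>lam i t\<bar> \<le> Bd" if "t \<in> {0..<tB}" "i \<in> {1..n}" for t i
      proof -
        have "\<bar>lam0 i\<bar> \<le> (\<Sum>i=1..n. \<bar>lam0 i\<bar>)" using member_le_sum[of i "{1..n}" "\<lambda>i. \<bar>lam0 i\<bar>"] that by auto
        moreover have "max (lam0 i) (sqrt C) \<le> \<bar>lam0 i\<bar> + sqrt C" using sC abs_ge_self[of "lam0 i"] abs_ge_zero[of "lam0 i"] by (intro max.boundedI) linarith+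
        ultimately show ?thesis using lam_lb[OF that(2,1)] lam_ub[OF that(2,1)] A Rr0 sC sum0
          unfolding Bd_def abs_le_iff by linarith
      qed
    qed
    then show False using nomax by blast
  qed
  have lam1_minf: "eventually (\<lambda>t. lam 1 t < - A) (at_left tB)" for A
  proof (rule ccontr)
    assume nev: "\<not> eventually (\<lambda>t. lam 1 t < - A) (at_left tB)"
    have freq: "\<exists>y>b. y < tB \<and> - A \<le> lam 1 y" if "b < tB" for b
    proof (rule ccontr)
      assume "\<not> (\<exists>y>b. y < tB \<and> - A \<le> lam 1 y)"
      then have "\<forall>y>b. y < tB \<longrightarrow> lam 1 y < - A" by (auto simp: not_le)
      then have "eventually (\<lambda>t. lam 1 t < - A) (at_left tB)"
        using eventually_at_left[OF that] that by blast
      then show False using nev by simp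
    qed
    define A' where "A' = \<bar>A\<bar>"
    define s where "s = sqrt K"
    have s0: "0 < s" using K0 by (simp add: s_def)
    have ss: "s * s = K" using K0 by (simp add: s_def)
    define th where "th t = arctan (lam 1 t / s)" for t
    define thA where "thA = arctan (- A' / s)"
    define e where "e = (thA + pi/2)/2"
    have e0: "0 < e" using arctan_lbound[of "-A'/s"] by (simp add: e_def thA_def)
    define b where "b = max 0 (tB - e / s)"
    have b: "b < tB" "0 \<le> b" "tB - e / s \<le> b" using tB e0 s0 by (auto simp: b_def)
    obtain t1 where t1: "b < t1" "t1 < tB" "- A \<le> lam 1 t1" using freq[OF b(1)] by blast
    have t1I: "t1 \<in> {0..<tB}" using t1 b by auto
    have th1: "thA \<le> th t1"
      unfolding th_def thA_def arctan_le_iff using t1(3) s0 by (intro divide_right_mono) (auto simp: A'_def)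
    have th_lb: "th t1 - s * (t - t1) \<le> th t" if t: "t1 \<le> t" "t < tB" for t
    proof -
      have "(\<lambda>x. - (th x + s * x)) t \<le> - (th t1 + s * t1)"
      proof (rule barrier[where f="\<lambda>x. - (th x + s * x)" and a=t1 and b=t])
        show "t1 \<le> t" using t by simp
        show "- (th t1 + s * t1) \<le> - (th t1 + s * t1)" by simp
        show "continuous_on {t1..t} (\<lambda>x. - (th x + s * x))"
          unfolding th_def using t t1I s0 by (intro continuous_intros cont_sub[OF one_in]) auto
        fix x assume x: "t1 < x" "x < t" "- (th t1 + s * t1) < - (th x + s * x)"
        have xI: "x \<in> {0..<tB}" using x t t1I by auto
        define Dl where "Dl = - (lam 1 x)\<^sup>2 + k / real n * (rho x - cb)"
        have dl: "(lam 1 has_real_derivative Dl) (at x)"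
          unfolding Dl_def using x t t1I by (intro interior_deriv[OF _ _ dlam[OF xI one_in]]) auto
        have "(th has_real_derivative inverse (1 + (lam 1 x / s)\<^sup>2) * (Dl / s)) (at x)"
          unfolding th_def by (rule DERIV_chain2[OF DERIV_arctan DERIV_cdivide[OF dl]])
        then have "((\<lambda>x. - (th x + s * x)) has_real_derivative - (inverse (1 + (lam 1 x / s)\<^sup>2) * (Dl / s) + s * 1)) (at x)"
          by (intro DERIV_minus DERIV_add DERIV_cmult DERIV_ident)
        moreover have "- (inverse (1 + (lam 1 x / s)\<^sup>2) * (Dl / s) + s * 1) \<le> 0"
        proof -
          define w where "w = 1 + (lam 1 x / s)\<^sup>2"
          have w0: "0 < w" unfolding w_def by (intro add_pos_nonneg) auto
          have Dl_lb: "- (lam 1 x)\<^sup>2 - K \<le> Dl" using q_lb[OF xI] by (simp add: Dl_def)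
          have "- s * w = (- (lam 1 x)\<^sup>2 - K) / s" using s0 by (simp add: w_def field_simps power2_eq_square ss[symmetric])
          also have "\<dots> \<le> Dl / s" using Dl_lb s0 by (intro divide_right_mono) auto
          finally have "- s * w \<le> Dl / s" .
          then have "- s \<le> (Dl / s) / w" using pos_le_divide_eq[OF w0] by blast
          then show ?thesis by (simp add: w_def divide_inverse mult.commute)
        qed
        ultimately show "\<exists>D. ((\<lambda>x. - (th x + s * x)) has_real_derivative D) (at x) \<and> D \<le> 0" by blast
      qed
      then show ?thesis by (simp add: algebra_simps)
    qed
    define c where "c = thA - e"
    have thAb: "- (pi/2) < thA" "thA < pi/2" unfolding thA_def by (rule arctan_lbound, rule arctan_ubound)
    have cb1: "- (pi/2) < c" using thAb unfolding c_def e_def by (simp add: field_simps)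
    have cb2: "c < pi/2" using thAb unfolding c_def e_def by (simp add: field_simps)
    note c_bounds = cb1 cb2
    have lam_lb1: "s * tan c \<le> lam 1 t" if t: "t1 \<le> t" "t < tB" for t
    proof -
      have "tB - t1 < e / s" using t1 b by linarith
      then have se: "s * (tB - t1) < e" using s0 by (simp add: field_simps)
      have "s * (t - t1) \<le> s * (tB - t1)" using t s0 by (intro mult_left_mono) auto
      then have "c \<le> th t" using th_lb[OF t] th1 se by (simp add: c_def)
      then have "arctan (tan c) \<le> arctan (lam 1 t / s)" using arctan_tan[OF c_bounds] by (simp add: th_def)
      then have "tan c \<le> lam 1 t / s" by (simp add: arctan_le_iff)
      then show ?thesis using s0 by (simp add: field_simps)
    qed
    obtain tm where tm: "tm \<in> {0..t1}" "\<And>y. y \<in> {0..t1} \<Longrightarrow> lam 1 tm \<le> lam 1 y"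
      using continuous_attains_inf[OF compact_Icc _ cont_sub[OF one_in, of 0 t1]] t1I by auto
    have "\<forall>t\<in>{0..<tB}. - (- min (lam 1 tm) (s * tan c)) \<le> lam 1 t"
    proof
      fix t assume t: "t \<in> {0..<tB}"
      show "- (- min (lam 1 tm) (s * tan c)) \<le> lam 1 t"
      proof (cases "t \<le> t1")
        case True then show ?thesis using tm(2)[of t] t by auto
      next
        case False then show ?thesis using lam_lb1[of t] t by auto
      qed
    qed
    then show False using no_lb by blast
  qed
  show ?thesis
  proof (intro allI impI)
    fix j assume jJ: "J < j \<and> j \<le> n"
    have j: "j \<in> {1..n}" using jJ J by auto
    define D where "D = lam0 j - lam0 1"
    have D0: "0 < D" using D_pos jJ by (simp add: D_def)
    define dl where "dl t = lam j t - lam 1 t" for t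
    have dl_rel: "dl t * (u 1 t * u j t) = D" if "t \<in> {0..<tB}" for t
      using rel[OF j that] by (simp add: dl_def D_def)
    have uu_pos: "0 < u 1 t * u j t" for t using u_pos[of 1 t] u_pos[of j t] by simp
    have dl_pos: "0 < dl t" if "t \<in> {0..<tB}" for t
      using dl_rel[OF that] D0 uu_pos[of t] zero_less_mult_pos2[of "dl t" "u 1 t * u j t"] by simp
    have dl_ne: "lam j t - lam 1 t \<noteq> 0" if "t \<in> {0..<tB}" for t using dl_pos[OF that] by (simp add: dl_def)
    have uu_eq: "u 1 t * u j t = D / dl t" if "t \<in> {0..<tB}" for t
      using dl_rel[OF that] dl_pos[OF that] by (simp add: field_simps)
    define r where "r t = lam 1 t / dl t" for t
    define A0 where "A0 = sqrt (2 * K) + 1"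
    have sK: "0 \<le> sqrt (2 * K)" using K0 by simp
    obtain b0 where b0: "b0 < tB" "\<And>y. b0 < y \<Longrightarrow> y < tB \<Longrightarrow> lam 1 y < - A0"
      using lam1_minf[of A0] eventually_at_left[OF tB] by auto
    define t0 where "t0 = (max b0 0 + tB) / 2"
    have t0: "b0 < t0" "0 \<le> t0" "t0 < tB" using b0 tB by (auto simp: t0_def)
    have lamneg: "lam 1 t < - A0" if "t0 \<le> t" "t < tB" for t using b0(2)[of t] t0 that by auto
    have lam_sq: "2 * K < (lam 1 t)\<^sup>2" if "t0 \<le> t" "t < tB" for t
    proof -
      have "sqrt (2*K) < - lam 1 t" using lamneg[OF that] by (simp add: A0_def)
      then have "(sqrt (2*K))\<^sup>2 < (- lam 1 t)\<^sup>2" using sK by (intro power_strict_mono) auto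
      then show ?thesis using K0 by simp
    qed
    have cr: "continuous_on {a..b} r" if "0 \<le> a" "b < tB" for a b
      unfolding r_def dl_def using that dl_ne
      by (intro continuous_intros cont_sub[OF one_in] cont_sub[OF j]) auto
    define m where "m = min (r t0) (-2)"
    have r_lb: "m \<le> r t" if t: "t0 \<le> t" "t < tB" for t
    proof -
      have "(\<lambda>x. - r x) t \<le> - m"
      proof (rule barrier[where f="\<lambda>x. - r x" and a=t0 and b=t])
        show "t0 \<le> t" using t by simp
        show "- r t0 \<le> - m" by (simp add: m_def)
        show "continuous_on {t0..t} (\<lambda>x. - r x)" using t t0 by (intro continuous_intros cr) auto
        fix x assume x: "t0 < x" "x < t" "- m < - r x"
        have xI: "x \<in> {0..<tB}" using x t t0 by auto
        define qq where "qq = k / real n * (rho x - cb)"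
        have d1: "(lam 1 has_real_derivative (- (lam 1 x)\<^sup>2 + qq)) (at x)"
          unfolding qq_def using x t t0 by (intro interior_deriv[OF _ _ dlam[OF xI one_in]]) auto
        have dj: "(lam j has_real_derivative (- (lam j x)\<^sup>2 + qq)) (at x)"
          unfolding qq_def using x t t0 by (intro interior_deriv[OF _ _ dlam[OF xI j]]) auto
        have ddl: "(dl has_real_derivative ((- (lam j x)\<^sup>2 + qq) - (- (lam 1 x)\<^sup>2 + qq))) (at x)"
          unfolding dl_def by (rule DERIV_diff[OF dj d1])
        have dr: "(r has_real_derivative ((- (lam 1 x)\<^sup>2 + qq) * dl x - lam 1 x * ((- (lam j x)\<^sup>2 + qq) - (- (lam 1 x)\<^sup>2 + qq))) / (dl x * dl x)) (at x)"
          unfolding r_def using DERIV_divide[OF d1 ddl] dl_pos[OF xI] by simp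
        define l where "l = lam 1 x"
        define d where "d = dl x"
        have d0: "0 < d" using dl_pos[OF xI] by (simp add: d_def)
        have ljx: "lam j x = l + d" by (simp add: l_def d_def dl_def)
        have l_neg: "l < 0" using lamneg[of x] x t sK unfolding l_def A0_def by linarith
        have l_sq: "2 * K < l\<^sup>2" using lam_sq[of x] x t by (simp add: l_def)
        have qq_lb: "- K \<le> qq" using q_lb[OF xI] by (simp add: qq_def)
        have rx: "r x < -2" using x(3) by (simp add: m_def)
        then have "l / d < -2" by (simp add: r_def l_def d_def)
        then have ld2: "l < -2 * d" using d0 by (simp add: divide_less_eq)
        have ld: "l * (- l / 2) \<le> l * d" using ld2 l_neg by (intro mult_left_mono_neg) auto
        have N_eq: "(- l\<^sup>2 + qq) * d - l * ((- (l + d)\<^sup>2 + qq) - (- l\<^sup>2 + qq)) = d * (l\<^sup>2 + l * d + qq)"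
          by (simp add: algebra_simps power2_eq_square)
        have "l * (- l / 2) = - (l\<^sup>2) / 2" by (simp add: power2_eq_square)
        then have "0 \<le> l\<^sup>2 + l * d + qq" using ld l_sq qq_lb by linarith
        then have "0 \<le> (- l\<^sup>2 + qq) * d - l * ((- (l + d)\<^sup>2 + qq) - (- l\<^sup>2 + qq))"
          unfolding N_eq using d0 by simp
        then have F: "0 \<le> ((- l\<^sup>2 + qq) * d - l * ((- (l + d)\<^sup>2 + qq) - (- l\<^sup>2 + qq))) / (d * d)"
          using d0 by simp
        have ljx': "lam j x = lam 1 x + dl x" by (simp add: dl_def)
        have "0 \<le> ((- (lam 1 x)\<^sup>2 + qq) * dl x - lam 1 x * ((- (lam j x)\<^sup>2 + qq) - (- (lam 1 x)\<^sup>2 + qq))) / (dl x * dl x)"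
          using F unfolding l_def d_def by (simp only: ljx')
        then show "\<exists>D. ((\<lambda>x. - r x) has_real_derivative D) (at x) \<and> D \<le> 0"
          using DERIV_minus[OF dr] by (intro exI conjI) auto
      qed
      then show ?thesis by simp
    qed
    have r_neg: "r t < 0" if "t0 \<le> t" "t < tB" for t
    proof -
      have "lam 1 t < 0" using lamneg[OF that] sK unfolding A0_def by linarith
      moreover have "0 < dl t" using dl_pos that t0 by auto
      ultimately show ?thesis by (simp add: r_def divide_neg_pos)
    qed
    obtain tM where tM: "tM \<in> {0..t0}" "\<And>y. y \<in> {0..t0} \<Longrightarrow> \<bar>r y\<bar> \<le> \<bar>r tM\<bar>"
      using continuous_attains_sup[OF compact_Icc _ continuous_on_rabs[OF cr[of 0 t0]]] t0 by auto
    define Rb where "Rb = max \<bar>r tM\<bar> \<bar>m\<bar>"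
    have Rb0: "0 \<le> Rb" by (simp add: Rb_def)
    have r_bnd: "\<bar>r t\<bar> \<le> Rb" if t: "t \<in> {0..<tB}" for t
    proof (cases "t \<le> t0")
      case True then show ?thesis using tM(2)[of t] t by (auto simp: Rb_def)
    next
      case False
      then have "m \<le> r t" "r t < 0" using r_lb[of t] r_neg[of t] t by auto
      then show ?thesis by (auto simp: Rb_def)
    qed
    show "(\<exists>M. \<forall>t\<in>{0..<tB}. \<forall>d. (u 1 has_real_derivative d) (at t within {0..<tB})
                 \<longrightarrow> \<bar>d * u j t\<bar> \<le> M) \<and>
           (\<exists>M. \<forall>t\<in>{0..<tB}. \<forall>d. (u j has_real_derivative d) (at t within {0..<tB})
                 \<longrightarrow> \<bar>u 1 t * d\<bar> \<le> M) \<and>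
           ((\<lambda>t. u 1 t * u j t) \<longlongrightarrow> 0) (at_left tB)"
    proof (intro conjI)
      show "\<exists>M. \<forall>t\<in>{0..<tB}. \<forall>d. (u 1 has_real_derivative d) (at t within {0..<tB})
                 \<longrightarrow> \<bar>d * u j t\<bar> \<le> M"
      proof (intro exI ballI allI impI)
        fix t d assume t: "t \<in> {0..<tB}" and hd: "(u 1 has_real_derivative d) (at t within {0..<tB})"
        have "d = lam 1 t * u 1 t" using deriv_unique_Ico[OF t hd du[OF one_in t]] .
        then have "d * u j t = lam 1 t * (u 1 t * u j t)" by simp
        also have "\<dots> = lam 1 t * (D / dl t)" using uu_eq[OF t] by simp
        also have "\<dots> = D * r t" by (simp add: r_def divide_inverse ac_simps)
        finally have "\<bar>d * u j t\<bar> = D * \<bar>r t\<bar>" using D0 by (simp add: abs_mult)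
        also have "\<dots> \<le> D * Rb" using r_bnd[OF t] D0 by (intro mult_left_mono) auto
        finally show "\<bar>d * u j t\<bar> \<le> D * Rb" .
      qed
      show "\<exists>M. \<forall>t\<in>{0..<tB}. \<forall>d. (u j has_real_derivative d) (at t within {0..<tB})
                 \<longrightarrow> \<bar>u 1 t * d\<bar> \<le> M"
      proof (intro exI ballI allI impI)
        fix t d assume t: "t \<in> {0..<tB}" and hd: "(u j has_real_derivative d) (at t within {0..<tB})"
        have "d = lam j t * u j t" using deriv_unique_Ico[OF t hd du[OF j t]] .
        then have "u 1 t * d = lam j t * (u 1 t * u j t)" by simp
        also have "\<dots> = lam j t * (D / dl t)" using uu_eq[OF t] by simp
        also have "\<dots> = D * (r t + 1)" using dl_ne[OF t] by (simp add: r_def dl_def field_simps)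
        finally have "\<bar>u 1 t * d\<bar> = D * \<bar>r t + 1\<bar>" using D0 by (simp add: abs_mult)
        also have "\<dots> \<le> D * (Rb + 1)" using r_bnd[OF t] D0 by (intro mult_left_mono) auto
        finally show "\<bar>u 1 t * d\<bar> \<le> D * (Rb + 1)" .
      qed
      show "((\<lambda>t. u 1 t * u j t) \<longlongrightarrow> 0) (at_left tB)"
        unfolding tendsto_iff
      proof (intro allI impI)
        fix e :: real assume e: "0 < e"
        have ev1: "eventually (\<lambda>t. lam 1 t < - (D * Rb / e + 1)) (at_left tB)" by (rule lam1_minf)
        have ev2: "eventually (\<lambda>t. t \<in> {t0<..<tB}) (at_left tB)" by (rule eventually_at_left_real[OF t0(3)])
        show "eventually (\<lambda>t. dist (u 1 t * u j t) 0 < e) (at_left tB)"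
          using ev1 ev2
        proof eventually_elim
          case (elim t)
          have tI: "t \<in> {0..<tB}" using elim(2) t0 by auto
          have DRb: "0 \<le> D * Rb / e" using D0 Rb0 e by simp
          have L: "D * Rb / e < \<bar>lam 1 t\<bar>" using elim(1) DRb by linarith
          have l0: "0 < \<bar>lam 1 t\<bar>" using L DRb by linarith
          have "D * Rb < \<bar>lam 1 t\<bar> * e" using L e by (simp add: divide_less_eq)
          have uu: "u 1 t * u j t = D * r t / lam 1 t" using uu_eq[OF tI] l0 by (simp add: r_def)
          have "dist (u 1 t * u j t) 0 = D * \<bar>r t\<bar> / \<bar>lam 1 t\<bar>" unfolding dist_real_def uu using D0 by (simp add: abs_mult)
          also have "\<dots> \<le> D * Rb / \<bar>lam 1 t\<bar>" using r_bnd[OF tI] D0 l0 by (intro divide_right_mono mult_left_mono) auto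
          also have "\<dots> < e" using \<open>D * Rb < \<bar>lam 1 t\<bar> * e\<close> l0 by (simp add: divide_less_eq mult.commute)
          finally show ?case .
        qed
      qed
    qed
  qed
qed

end
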